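(* (1) The map $\rho$ (resp. $\eta$, $\tau$) equals the composition of the maps $\rho_a^b$ (resp. $\eta_a^b$, $\tau_a^b$) taken along any linear extension of the coordinatewise partial order on $[m]\times[n]$ (i.e. for any ordering $(a_1,b_1),\dots,(a_{mn},b_{mn})$ of $[m]\times[n]$ in which $(a,b)$ precedes $(a',b')$ whenever $a\le a'$, $b\le b'$, $(a,b)\ne(a',b')$, we have $\rho=\rho_{a_{mn}}^{b_{mn}}\circ\dots\circ\rho_{a_1}^{b_1}$, and similarly for $\eta,\tau$). (2) $\rho=\tau\circ\eta$.
   Context: For $\mathbf{x}=(x_a^b)\in\mathrm{Mat}_{m\times n}(\mathbb{C}^* )$ define $\mathrm{gMax}_a^b(\mathbf{x})=\frac{x_a^{b-1}x_{a-1}^b}{x_a^{b-1}+x_{a-1}^b}$ if $a,b>1$; $x_1^{b-1}$ if $a=1<b$; $x_{a-1}^1$ if $b=1<a$; $1$ if $a=b=1$. Define $\mathrm{gMin}_a^b(\mathbf{x})=x_{a+1}^b+x_a^{b+1}$ if $a<m,b<n$; $x_m^{b+1}$ if $a=m,b<n$; $x_{a+1}^n$ if $a<m,b=n$; $1$ if $a=m,b=n$. The rational maps $\eta_a^b,T_a^b$ change only the entry $x_a^b$: $\eta_a^b:x_a^b\mapsto x_a^b\,\mathrm{gMax}_a^b(\mathbf{x})$, $T_a^b:x_a^b\mapsto\frac{1}{x_a^b}\mathrm{gMax}_a^b(\mathbf{x})\mathrm{gMin}_a^b(\mathbf{x})$. Let $\tau_a^b=T_1^{b-a+1}\circ\dots\circ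 T_{a-2}^{b-2}\circ T_{a-1}^{b-1}$ if $a\le b$ and $\tau_a^b=T_{a-b+1}^1\circ\dots\circ T_{a-2}^{b-2}\circ T_{a-1}^{b-1}$ if $a\ge b$ (the identity if $a=1$ or $b=1$), and $\rho_a^b=\tau_a^b\circ\eta_a^b$. Define $\rho=(\rho_m^n\circ\dots\circ\rho_m^1)\circ\dots\circ(\rho_1^n\circ\dots\circ\rho_1^1)$, and $\eta,\tau$ the same way with $\rho_a^b$ replaced by $\eta_a^b$, resp. $\tau_a^b$. *)

theory Defs
  imports "HOL-Analysis.Analysis"
begin

text \<open>Matrices x = (x_a^b) are represented as functions  x :: nat => nat => complex,
  with x a b the entry x_a^b; only indices 1 <= a <= m, 1 <= b <= n are relevant.
  Division is the totalized HOL division; equality of rational maps is therefore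
  expressed as agreement on a dense open set (see rat_map_eq).\<close>

type_synonym cmat = "nat \<Rightarrow> nat \<Rightarrow> complex"

definition upd_entry :: "cmat \<Rightarrow> nat \<Rightarrow> nat \<Rightarrow> complex \<Rightarrow> cmat" where
  "upd_entry x a b v = x(a := (x a)(b := v))"

definition gMax :: "cmat \<Rightarrow> nat \<Rightarrow> nat \<Rightarrow> complex" where
  "gMax x a b =
     (if 1 < a \<and> 1 < b then x a (b-1) * x (a-1) b / (x a (b-1) + x (a-1) b)
      else if a = 1 \<and> 1 < b then x 1 (b-1)
      else if b = 1 \<and> 1 < a then x (a-1) 1
      else 1)"

definition gMin :: "nat \<Rightarrow> nat \<Rightarrow> cmat \<Rightarrow> nat \<Rightarrow> nat \<Rightarrow> complex" where
  "gMin m n x a b =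
     (if a < m \<and> b < n then x (a+1) b + x a (b+1)
      else if a = m \<and> b < n then x m (b+1)
      else if a < m \<and> b = n then x (a+1) n
      else 1)"

definition eta_ab :: "nat \<Rightarrow> nat \<Rightarrow> cmat \<Rightarrow> cmat" where
  "eta_ab a b x = upd_entry x a b (x a b * gMax x a b)"

definition T_ab :: "nat \<Rightarrow> nat \<Rightarrow> nat \<Rightarrow> nat \<Rightarrow> cmat \<Rightarrow> cmat" where
  "T_ab m n a b x = upd_entry x a b (gMax x a b * gMin m n x a b / x a b)"

text \<open>tau_a^b = T_{a-k0}^{b-k0} o ... o T_{a-1}^{b-1} with k0 = min a b - 1:
  T_{a-1}^{b-1} is applied first, then T_{a-2}^{b-2}, etc.  (identity if a=1 or b=1).\<close>
definition tau_ab :: "nat \<Rightarrow> nat \<Rightarrow> nat \<Rightarrow> nat \<Rightarrow> cmat \<Rightarrow> cmat" where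
  "tau_ab m n a b x = fold (\<lambda>k y. T_ab m n (a-k) (b-k) y) [1..<min a b] x"

definition rho_ab :: "nat \<Rightarrow> nat \<Rightarrow> nat \<Rightarrow> nat \<Rightarrow> cmat \<Rightarrow> cmat" where
  "rho_ab m n a b = tau_ab m n a b \<circ> eta_ab a b"

definition comp_along :: "(nat \<Rightarrow> nat \<Rightarrow> cmat \<Rightarrow> cmat) \<Rightarrow> (nat \<times> nat) list \<Rightarrow> cmat \<Rightarrow> cmat" where
  "comp_along F L x = fold (\<lambda>(a,b) y. F a b y) L x"

text \<open>Row-by-row order (1,1),...,(1,n),(2,1),...,(m,n), giving
  (F_m^n o ... o F_m^1) o ... o (F_1^n o ... o F_1^1).\<close>
definition std_order :: "nat \<Rightarrow> nat \<Rightarrow> (nat \<times> nat) list" where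
  "std_order m n = concat (map (\<lambda>a. map (\<lambda>b. (a,b)) [1..<n+1]) [1..<m+1])"

definition rho_map :: "nat \<Rightarrow> nat \<Rightarrow> cmat \<Rightarrow> cmat" where
  "rho_map m n = comp_along (rho_ab m n) (std_order m n)"

definition eta_map :: "nat \<Rightarrow> nat \<Rightarrow> cmat \<Rightarrow> cmat" where
  "eta_map m n = comp_along eta_ab (std_order m n)"

definition tau_map :: "nat \<Rightarrow> nat \<Rightarrow> cmat \<Rightarrow> cmat" where
  "tau_map m n = comp_along (tau_ab m n) (std_order m n)"

definition linear_extension :: "nat \<Rightarrow> nat \<Rightarrow> (nat \<times> nat) list \<Rightarrow> bool" where
  "linear_extension m n L \<longleftrightarrow>
     distinct L \<and> set L = {1..m} \<times> {1..n} \<and>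
     (\<forall>i<length L. \<forall>j<length L.
        fst (L!i) \<le> fst (L!j) \<and> snd (L!i) \<le> snd (L!j) \<and> L!i \<noteq> L!j \<longrightarrow> i < j)"

definition rat_map_eq :: "nat \<Rightarrow> nat \<Rightarrow> (cmat \<Rightarrow> cmat) \<Rightarrow> (cmat \<Rightarrow> cmat) \<Rightarrow> bool" where
  "rat_map_eq m n f g \<longleftrightarrow>
     (\<exists>U. open U \<and> closure U = UNIV \<and>
        (\<forall>x\<in>U. \<forall>a\<in>{1..m}. \<forall>b\<in>{1..n}. f x a b = g x a b))"

end

theory Submission
  imports Defs
begin

definition loc :: "(nat\<times>nat) set \<Rightarrow> (nat\<times>nat) set \<Rightarrow> (cmat \<Rightarrow> cmat) \<Rightarrow> bool" where
  "loc W R f \<longleftrightarrow> (\<forall>x a b. (a,b) \<notin> W \<longrightarrow> f x a b = x a b) \<and>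
     (\<forall>x y. (\<forall>a b. (a,b) \<in> R \<longrightarrow> x a b = y a b) \<longrightarrow> (\<forall>a b. (a,b) \<in> W \<longrightarrow> f x a b = f y a b))"

lemma loc_id: "W \<subseteq> R \<Longrightarrow> loc W R id"
  unfolding loc_def by auto

lemma loc_comp: "loc W R f \<Longrightarrow> loc W R g \<Longrightarrow> loc W R (g \<circ> f)"
  unfolding loc_def
proof (intro conjI allI impI)
  fix x a b assume h: "(\<forall>x a b. (a, b) \<notin> W \<longrightarrow> f x a b = x a b) \<and>
        (\<forall>x y. (\<forall>a b. (a, b) \<in> R \<longrightarrow> x a b = y a b) \<longrightarrow> (\<forall>a b. (a, b) \<in> W \<longrightarrow> f x a b = f y a b))"
    "(\<forall>x a b. (a, b) \<notin> W \<longrightarrow> g x a b = x a b) \<and>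
        (\<forall>x y. (\<forall>a b. (a, b) \<in> R \<longrightarrow> x a b = y a b) \<longrightarrow> (\<forall>a b. (a, b) \<in> W \<longrightarrow> g x a b = g y a b))"
    "(a,b) \<notin> W"
  then show "(g \<circ> f) x a b = x a b" by simp
next
  fix x y :: cmat and a b assume h: "(\<forall>x a b. (a, b) \<notin> W \<longrightarrow> f x a b = x a b) \<and>
        (\<forall>x y. (\<forall>a b. (a, b) \<in> R \<longrightarrow> x a b = y a b) \<longrightarrow> (\<forall>a b. (a, b) \<in> W \<longrightarrow> f x a b = f y a b))"
    "(\<forall>x a b. (a, b) \<notin> W \<longrightarrow> g x a b = x a b) \<and>
        (\<forall>x y. (\<forall>a b. (a, b) \<in> R \<longrightarrow> x a b = y a b) \<longrightarrow> (\<forall>a b. (a, b) \<in> W \<longrightarrow> g x a b = g y a b))"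
    and xy: "\<forall>a b. (a, b) \<in> R \<longrightarrow> x a b = y a b" and ab: "(a,b) \<in> W"
  have "\<forall>a b. (a, b) \<in> R \<longrightarrow> f x a b = f y a b"
  proof (intro allI impI)
    fix c d assume "(c,d) \<in> R"
    show "f x c d = f y c d"
    proof (cases "(c,d) \<in> W")
      case True then show ?thesis using h(1) xy by blast
    next
      case False then show ?thesis using h(1) xy \<open>(c,d) \<in> R\<close> by simp
    qed
  qed
  then show "(g \<circ> f) x a b = (g \<circ> f) y a b" using h(2) ab by simp
qed

lemma loc_fold: "W \<subseteq> R \<Longrightarrow> (\<And>k. k \<in> set ks \<Longrightarrow> loc W R (g k)) \<Longrightarrow> loc W R (fold g ks)"
proof (induction ks)
  case Nil then show ?case using loc_id[of W R] by (simp add: id_def)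
next
  case (Cons k ks)
  then have "loc W R (fold g ks \<circ> g k)" by (intro loc_comp) auto
  then show ?case by (simp add: comp_def)
qed

lemma loc_mono: "loc W R f \<Longrightarrow> W \<subseteq> W' \<Longrightarrow> R \<subseteq> R' \<Longrightarrow> W' \<subseteq> R' \<Longrightarrow> loc W' R' f"
proof -
  assume f: "loc W R f" and s: "W \<subseteq> W'" "R \<subseteq> R'" "W' \<subseteq> R'"
  have f1: "\<And>x a b. (a,b) \<notin> W \<Longrightarrow> f x a b = x a b" using f unfolding loc_def by blast
  have f2: "\<And>x y a b. (\<forall>a b. (a, b) \<in> R \<longrightarrow> x a b = y a b) \<Longrightarrow> (a,b) \<in> W \<Longrightarrow> f x a b = f y a b"
    using f unfolding loc_def by blast
  show ?thesis unfolding loc_def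
  proof (intro conjI allI impI)
    fix x :: cmat and a b assume "(a,b) \<notin> W'"
    then show "f x a b = x a b" using f1 s by blast
  next
    fix x y :: cmat and a b assume xy: "\<forall>a b. (a, b) \<in> R' \<longrightarrow> x a b = y a b" and ab: "(a,b) \<in> W'"
    show "f x a b = f y a b"
    proof (cases "(a,b) \<in> W")
      case True
      have "\<forall>a b. (a, b) \<in> R \<longrightarrow> x a b = y a b" using xy s by blast
      then show ?thesis using f2 True by blast
    next
      case False
      then show ?thesis using f1 xy ab s by auto
    qed
  qed
qed

lemma loc_un: "loc W1 R1 f \<Longrightarrow> loc W2 R2 g \<Longrightarrow> W1 \<subseteq> R1 \<Longrightarrow> W2 \<subseteq> R2 \<Longrightarrow> loc (W1 \<union> W2) (R1 \<union> R2) (g \<circ> f)"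
  by (rule loc_comp; erule loc_mono; auto)

lemma loc_comm:
  assumes f: "loc W1 R1 f" and g: "loc W2 R2 g" and d1: "W1 \<inter> R2 = {}" and d2: "W2 \<inter> R1 = {}"
    and s: "W1 \<subseteq> R1"
  shows "f \<circ> g = g \<circ> f"
proof (intro ext)
  fix x a b
  have f1: "\<And>x a b. (a,b) \<notin> W1 \<Longrightarrow> f x a b = x a b" using f unfolding loc_def by blast
  have f2: "\<And>x y a b. (\<forall>a b. (a, b) \<in> R1 \<longrightarrow> x a b = y a b) \<Longrightarrow> (a,b) \<in> W1 \<Longrightarrow> f x a b = f y a b"
    using f unfolding loc_def by blast
  have g1: "\<And>x a b. (a,b) \<notin> W2 \<Longrightarrow> g x a b = x a b" using g unfolding loc_def by blast
  have g2: "\<And>x y a b. (\<forall>a b. (a, b) \<in> R2 \<longrightarrow> x a b = y a b) \<Longrightarrow> (a,b) \<in> W2 \<Longrightarrow> g x a b = g y a b"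
    using g unfolding loc_def by blast
  show "(f \<circ> g) x a b = (g \<circ> f) x a b"
  proof (cases "(a,b) \<in> W1")
    case True
    then have "(a,b) \<notin> W2" using s d2 by blast
    have "f (g x) a b = f x a b"
      by (rule f2[OF _ True]) (use g1 d2 in blast)
    then show ?thesis using g1[OF \<open>(a,b) \<notin> W2\<close>] by simp
  next
    case False
    show ?thesis
    proof (cases "(a,b) \<in> W2")
      case True
      have "g (f x) a b = g x a b"
        by (rule g2[OF _ True]) (use f1 d1 in blast)
      then show ?thesis using f1[OF False] by simp
    next
      case F2: False
      then show ?thesis using f1[OF False] g1[OF F2] by simp
    qed
  qed
qed

definition N :: "nat \<Rightarrow> nat \<Rightarrow> (nat\<times>nat) set" where
  "N c e = {(c,e),(c,e-1),(c-1,e),(c+1,e),(c,e+1)}"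

lemma gMax_cong: "(\<forall>a b. (a,b) \<in> N c e \<longrightarrow> x a b = y a b) \<Longrightarrow> gMax x c e = gMax y c e"
  unfolding gMax_def N_def by auto

lemma gMin_cong: "(\<forall>a b. (a,b) \<in> N c e \<longrightarrow> x a b = y a b) \<Longrightarrow> gMin m n x c e = gMin m n y c e"
  unfolding gMin_def N_def by auto

lemma loc_T: "loc {(c,e)} (N c e) (T_ab m n c e)"
  unfolding loc_def
proof (intro conjI allI impI)
  fix x a b assume "(a,b) \<notin> {(c,e)}"
  then show "T_ab m n c e x a b = x a b" by (auto simp: T_ab_def upd_entry_def)
next
  fix x y :: cmat and a b assume h: "\<forall>a b. (a, b) \<in> N c e \<longrightarrow> x a b = y a b" and "(a,b) \<in> {(c,e)}"
  moreover have "x c e = y c e" using h by (simp add: N_def)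
  ultimately show "T_ab m n c e x a b = T_ab m n c e y a b"
    using gMax_cong[OF h] gMin_cong[OF h] by (auto simp: T_ab_def upd_entry_def)
qed

lemma loc_eta: "loc {(c,e)} (N c e) (eta_ab c e)"
  unfolding loc_def
proof (intro conjI allI impI)
  fix x a b assume "(a,b) \<notin> {(c,e)}"
  then show "eta_ab c e x a b = x a b" by (auto simp: eta_ab_def upd_entry_def)
next
  fix x y :: cmat and a b assume h: "\<forall>a b. (a, b) \<in> N c e \<longrightarrow> x a b = y a b" and "(a,b) \<in> {(c,e)}"
  moreover have "x c e = y c e" using h by (simp add: N_def)
  ultimately show "eta_ab c e x a b = eta_ab c e y a b"
    using gMax_cong[OF h] by (auto simp: eta_ab_def upd_entry_def)
qed

definition DR :: "nat \<Rightarrow> nat \<Rightarrow> (nat\<times>nat) set" where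
  "DR a b = {(c,e). int e - int c = int b - int a \<and> c < a}"
definition BL :: "nat \<Rightarrow> nat \<Rightarrow> (nat\<times>nat) set" where
  "BL a b = {(c,e). \<bar>int e - int c - (int b - int a)\<bar> \<le> 1 \<and> (c < a \<or> c = a \<and> e < b)}"
definition Diag :: "int \<Rightarrow> (nat\<times>nat) set" where
  "Diag d = {(c,e). int e - int c = d}"
definition Band :: "int \<Rightarrow> (nat\<times>nat) set" where
  "Band d = {(c,e). \<bar>int e - int c - d\<bar> \<le> 1}"

lemma loc_tau_DR: "loc (DR a b) (BL a b) (tau_ab m n a b)"
  unfolding tau_ab_def
proof (rule loc_fold)
  show "DR a b \<subseteq> BL a b" by (auto simp: DR_def BL_def)
next
  fix k assume k: "k \<in> set [1..<min a b]"
  show "loc (DR a b) (BL a b) (T_ab m n (a - k) (b - k))"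
  proof (rule loc_mono[OF loc_T])
    show "{(a - k, b - k)} \<subseteq> DR a b" using k by (auto simp: DR_def)
    show "N (a - k) (b - k) \<subseteq> BL a b" using k by (auto simp: N_def BL_def)
    show "DR a b \<subseteq> BL a b" by (auto simp: DR_def BL_def)
  qed
qed

lemma loc_tau: "loc (Diag (int b - int a)) (Band (int b - int a)) (tau_ab m n a b)"
  by (rule loc_mono[OF loc_tau_DR]) (auto simp: DR_def BL_def Diag_def Band_def)

lemma loc_eta_D: "loc (Diag (int b - int a)) (Band (int b - int a)) (eta_ab a b)"
  by (rule loc_mono[OF loc_eta]) (auto simp: N_def Diag_def Band_def)

lemma loc_rho: "loc (Diag (int b - int a)) (Band (int b - int a)) (rho_ab m n a b)"
proof -
  have "loc (Diag (int b - int a) \<union> Diag (int b - int a)) (Band (int b - int a) \<union> Band (int b - int a))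
     (tau_ab m n a b \<circ> eta_ab a b)"
    by (rule loc_un[OF loc_eta_D loc_tau]) (auto simp: Diag_def Band_def)
  then show ?thesis unfolding rho_ab_def by simp
qed


fun before :: "'a list \<Rightarrow> 'a \<Rightarrow> 'a \<Rightarrow> bool" where
  "before [] p q = False"
| "before (x#L) p q = ((x = p \<and> q \<in> set L) \<or> before L p q)"

lemma before_distinct: "distinct L \<Longrightarrow> before L p q \<Longrightarrow> p \<noteq> q"
proof (induction L)
  case Nil then show ?case by simp
next
  case (Cons x L)
  have "before L p q \<Longrightarrow> p \<in> set L"
    by (induction L) auto
  then show ?case using Cons by auto
qed

lemma before_idx: "before L p q \<Longrightarrow> \<exists>i j. i < j \<and> j < length L \<and> L!i = p \<and> L!j = q"
proof (induction L)
  case Nil then show ?case by simp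
next
  case (Cons y L)
  show ?case
  proof (cases "y = p \<and> q \<in> set L")
    case True
    then obtain j where "j < length L" "L!j = q" by (meson in_set_conv_nth)
    then show ?thesis using True by (intro exI[of _ 0] exI[of _ "Suc j"]) auto
  next
    case False
    then obtain i j where "i < j \<and> j < length L \<and> L!i = p \<and> L!j = q" using Cons by auto
    then show ?thesis by (intro exI[of _ "Suc i"] exI[of _ "Suc j"]) auto
  qed
qed

lemma before_sorted: "sorted_wrt R L \<Longrightarrow> before L p q \<Longrightarrow> R p q"
  by (induction L) auto

lemma before_mid: "q \<in> set P \<Longrightarrow> before (P @ x # S) q x"
  by (induction P) auto

lemma before_ins: "before (P @ S) q p \<Longrightarrow> before (P @ x # S) q p"
  by (induction P) auto

lemma fold_comm: "(\<forall>q\<in>set P. G x \<circ> G q = G q \<circ> G x) \<Longrightarrow> G x \<circ> fold G P = fold G P \<circ> G x"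
proof (induction P)
  case Nil then show ?case by simp
next
  case (Cons q P)
  have h: "\<forall>q'\<in>set P. G x \<circ> G q' = G q' \<circ> G x" using Cons.prems by (meson list.set_intros(2))
  have "G x \<circ> fold G P = fold G P \<circ> G x" "G x \<circ> G q = G q \<circ> G x"
    using Cons.IH[OF h] Cons.prems by (blast, meson list.set_intros(1))
  then have "G x \<circ> (fold G P \<circ> G q) = fold G P \<circ> G q \<circ> G x"
    by (metis comp_assoc)
  then show ?case by (simp only: fold_Cons)
qed

lemma fold_move: "(\<forall>q\<in>set P. G x \<circ> G q = G q \<circ> G x) \<Longrightarrow> fold G (P @ x # S) = fold G (x # P @ S)"
proof -
  assume "\<forall>q\<in>set P. G x \<circ> G q = G q \<circ> G x"
  then have "G x \<circ> fold G P = fold G P \<circ> G x" by (rule fold_comm)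
  then show ?thesis by (simp add: comp_assoc)
qed

lemma reorder:
  "distinct L \<Longrightarrow> distinct L' \<Longrightarrow> set L = set L' \<Longrightarrow>
   (\<forall>p q. before L p q \<longrightarrow> before L' q p \<longrightarrow> G p \<circ> G q = G q \<circ> G p) \<Longrightarrow> fold G L = fold G L'"
proof (induction L arbitrary: L')
  case Nil then show ?case by simp
next
  case (Cons x L1)
  then have "x \<in> set L'" by auto
  then obtain P S where L': "L' = P @ x # S" by (meson split_list)
  have xP: "x \<notin> set P" "x \<notin> set S" using Cons.prems(2) L' by auto
  have comm: "\<forall>q\<in>set P. G x \<circ> G q = G q \<circ> G x"
  proof
    fix q assume q: "q \<in> set P"
    then have "q \<in> set L1" using Cons.prems(3) L' xP by auto
    then have "before (x # L1) x q" by simp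
    moreover have "before L' q x" using L' q before_mid by metis
    ultimately show "G x \<circ> G q = G q \<circ> G x" using Cons.prems(4) by blast
  qed
  have "fold G L1 = fold G (P @ S)"
  proof (rule Cons.IH)
    show "distinct L1" using Cons.prems(1) by simp
    show "distinct (P @ S)" using Cons.prems(2) L' by simp
    show "set L1 = set (P @ S)" using Cons.prems(1,3) L' xP by auto
    show "\<forall>p q. before L1 p q \<longrightarrow> before (P @ S) q p \<longrightarrow> G p \<circ> G q = G q \<circ> G p"
    proof (intro allI impI)
      fix p q assume "before L1 p q" "before (P @ S) q p"
      then have "before (x # L1) p q" "before L' q p" using L' before_ins by auto
      then show "G p \<circ> G q = G q \<circ> G p" using Cons.prems(4) by blast
    qed
  qed
  then show ?case using fold_move[OF comm, of S] L' by simp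
qed

lemma fold_split:
  "(\<forall>p q. before L p q \<longrightarrow> G p \<circ> F q = F q \<circ> G p) \<Longrightarrow>
   fold (\<lambda>p. G p \<circ> F p) L = fold G L \<circ> fold F L"
proof (induction L)
  case Nil then show ?case by simp
next
  case (Cons p L)
  have h: "\<forall>p q. before L p q \<longrightarrow> G p \<circ> F q = F q \<circ> G p"
    using Cons.prems by (meson before.simps(2))
  have IH: "fold (\<lambda>p. G p \<circ> F p) L = fold G L \<circ> fold F L" using Cons.IH[OF h] .
  have "\<forall>q\<in>set L. G p \<circ> F q = F q \<circ> G p" using Cons.prems by (meson before.simps(2))
  then have c: "G p \<circ> fold F L = fold F L \<circ> G p"
  proof (induction L)
    case Nil then show ?case by simp
  next
    case (Cons q L)
    have h: "\<forall>q'\<in>set L. G p \<circ> F q' = F q' \<circ> G p" using Cons.prems by (meson list.set_intros(2))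
    have "G p \<circ> fold F L = fold F L \<circ> G p" "G p \<circ> F q = F q \<circ> G p"
      using Cons.IH[OF h] Cons.prems by (blast, meson list.set_intros(1))
    then have "G p \<circ> (fold F L \<circ> F q) = fold F L \<circ> F q \<circ> G p" by (metis comp_assoc)
    then show ?case by (simp only: fold_Cons)
  qed
  have "fold (\<lambda>p. G p \<circ> F p) (p # L) = fold G L \<circ> (fold F L \<circ> G p) \<circ> F p"
    using IH by (simp add: comp_assoc)
  also have "\<dots> = fold G (p # L) \<circ> fold F (p # L)" proof -
    have "fold F L \<circ> (G p \<circ> F p) = G p \<circ> (fold F L \<circ> F p)" by (metis c comp_assoc)
    then show ?thesis by (simp only: fold_Cons comp_assoc)
  qed
  finally show ?case .
qed

lemma std_Suc: "std_order (Suc m) n = std_order m n @ map (\<lambda>b. (Suc m, b)) [1..<n+1]"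
  by (simp add: std_order_def)

definition lexl :: "nat \<times> nat \<Rightarrow> nat \<times> nat \<Rightarrow> bool" where
  "lexl p q \<longleftrightarrow> fst p < fst q \<or> (fst p = fst q \<and> snd p < snd q)"

lemma std_set: "set (std_order m n) = {1..m} \<times> {1..n}"
  unfolding std_order_def by (auto simp: image_iff)

lemma std_sorted: "sorted_wrt lexl (std_order m n)"
proof (induction m)
  case 0 then show ?case by (simp add: std_order_def)
next
  case (Suc m)
  have "sorted_wrt lexl (map (\<lambda>b. (Suc m, b)) [1..<n+1])"
    using sorted_wrt_upt[of 1 "n+1"] by (simp add: sorted_wrt_map lexl_def del: upt_Suc)
  moreover have "\<forall>x\<in>set (std_order m n). \<forall>y\<in>set (map (\<lambda>b. (Suc m, b)) [1..<n+1]). lexl x y"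
    by (auto simp: std_set lexl_def)
  ultimately show ?case using Suc by (simp add: std_Suc sorted_wrt_append)
qed

lemma std_distinct: "distinct (std_order m n)"
proof -
  have "sorted_wrt lexl L \<Longrightarrow> distinct L" for L
    by (induction L) (auto simp: lexl_def)
  then show ?thesis using std_sorted by blast
qed

lemma comp_along_fold: "comp_along F L = fold (case_prod F) L"
  unfolding comp_along_def by (intro ext) (simp add: case_prod_beta')

definition dg :: "nat \<times> nat \<Rightarrow> int" where "dg p = int (snd p) - int (fst p)"

lemma incomp:
  assumes le: "linear_extension m n L" and b1: "before (std_order m n) p q" and b2: "before L q p"
  shows "\<bar>dg p - dg q\<bar> \<ge> 2"
proof -
  have lx: "lexl p q" using before_sorted[OF std_sorted b1] .
  obtain i j where ij: "i < j" "j < length L" "L!i = q" "L!j = p" using before_idx[OF b2] by blast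
  have "q \<noteq> p" using before_distinct[OF _ b2] le unfolding linear_extension_def by blast
  have "\<not> (fst p \<le> fst q \<and> snd p \<le> snd q)"
  proof
    assume "fst p \<le> fst q \<and> snd p \<le> snd q"
    then have a: "fst (L!j) \<le> fst (L!i) \<and> snd (L!j) \<le> snd (L!i) \<and> L!j \<noteq> L!i"
      using ij \<open>q \<noteq> p\<close> by simp
    have "\<forall>i<length L. \<forall>j<length L. fst (L!i) \<le> fst (L!j) \<and> snd (L!i) \<le> snd (L!j) \<and> L!i \<noteq> L!j \<longrightarrow> i < j"
      using le unfolding linear_extension_def by blast
    then have "j < i" using a ij by simp
    then show False using ij by simp
  qed
  moreover have "\<not> (fst q \<le> fst p \<and> snd q \<le> snd p)" using lx unfolding lexl_def by auto
  ultimately show ?thesis unfolding dg_def by auto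
qed

lemma diag_comm:
  assumes "loc (Diag d1) (Band d1) f" "loc (Diag d2) (Band d2) g" "\<bar>d1 - d2\<bar> \<ge> 2"
  shows "f \<circ> g = g \<circ> f"
  by (rule loc_comm[OF assms(1,2)]) (use assms(3) in \<open>auto simp: Diag_def Band_def\<close>)

lemma part1:
  assumes le: "linear_extension m n L"
    and loc: "\<And>a b. loc (Diag (int b - int a)) (Band (int b - int a)) (F a b)"
  shows "comp_along F (std_order m n) = comp_along F L"
  unfolding comp_along_fold
proof (rule reorder)
  show "distinct (std_order m n)" by (rule std_distinct)
  show "distinct L" using le unfolding linear_extension_def by blast
  show "set (std_order m n) = set L" using le unfolding linear_extension_def std_set by blast
  show "\<forall>p q. before (std_order m n) p q \<longrightarrow> before L q p \<longrightarrow> case_prod F p \<circ> case_prod F q = case_prod F q \<circ> case_prod F p"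
  proof (intro allI impI)
    fix p q assume "before (std_order m n) p q" "before L q p"
    then have "\<bar>dg p - dg q\<bar> \<ge> 2" using incomp le by blast
    then show "case_prod F p \<circ> case_prod F q = case_prod F q \<circ> case_prod F p"
      using diag_comm[OF loc loc] unfolding dg_def by (cases p, cases q) auto
  qed
qed

lemma part2: "rho_map m n = tau_map m n \<circ> eta_map m n"
proof -
  have "rho_map m n = fold (\<lambda>p. case_prod (tau_ab m n) p \<circ> case_prod eta_ab p) (std_order m n)"
    unfolding rho_map_def comp_along_fold rho_ab_def by (simp add: case_prod_beta')
  also have "\<dots> = tau_map m n \<circ> eta_map m n"
    unfolding tau_map_def eta_map_def comp_along_fold
  proof (rule fold_split, intro allI impI)
    fix p q assume b: "before (std_order m n) p q"
    obtain a b where p: "p = (a,b)" by fastforce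
    obtain c e where q: "q = (c,e)" by fastforce
    have lx: "a < c \<or> (a = c \<and> b < e)" using before_sorted[OF std_sorted b] p q by (simp add: lexl_def)
    have "tau_ab m n a b \<circ> eta_ab c e = eta_ab c e \<circ> tau_ab m n a b"
    proof (rule loc_comm[OF loc_tau_DR loc_eta])
      show "DR a b \<inter> N c e = {}" using lx by (auto simp: DR_def N_def)
      show "{(c, e)} \<inter> BL a b = {}" using lx by (auto simp: BL_def)
      show "DR a b \<subseteq> BL a b" by (auto simp: DR_def BL_def)
    qed
    then show "case_prod (tau_ab m n) p \<circ> case_prod eta_ab q = case_prod eta_ab q \<circ> case_prod (tau_ab m n) p"
      using p q by simp
  qed
  finally show ?thesis .
qed

lemma rat_eq: "f = g \<Longrightarrow> rat_map_eq m n f g"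
  unfolding rat_map_eq_def by (intro exI[of _ UNIV]) auto

theorem lemma4p4:
  fixes m n :: nat
  shows "(\<forall>L. linear_extension m n L \<longrightarrow>
            rat_map_eq m n (rho_map m n) (comp_along (rho_ab m n) L) \<and>
            rat_map_eq m n (eta_map m n) (comp_along eta_ab L) \<and>
            rat_map_eq m n (tau_map m n) (comp_along (tau_ab m n) L))
         \<and> rat_map_eq m n (rho_map m n) (tau_map m n \<circ> eta_map m n)"
proof (intro conjI allI impI)
  fix L assume le: "linear_extension m n L"
  show "rat_map_eq m n (rho_map m n) (comp_along (rho_ab m n) L)"
    unfolding rho_map_def by (rule rat_eq, rule part1[OF le loc_rho])
  show "rat_map_eq m n (eta_map m n) (comp_along eta_ab L)"
    unfolding eta_map_def by (rule rat_eq, rule part1[OF le loc_eta_D])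
  show "rat_map_eq m n (tau_map m n) (comp_along (tau_ab m n) L)"
    unfolding tau_map_def by (rule rat_eq, rule part1[OF le loc_tau])
next
  show "rat_map_eq m n (rho_map m n) (tau_map m n \<circ> eta_map m n)"
    by (rule rat_eq, rule part2)
qed

end
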